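(* Let $n$ be a positive integer and consider the finite configuration of height $2$ and type $(1,n,1)$ given by $$p_{0,1}=0,\quad p_{2,1}=2\mathrm{i},\quad p_{1,j}=\mathrm{i}+\cot\frac{j\pi}{n+1}\ \ (1\le j\le n).$$ This configuration is balanced, non-degenerate and has residual force $\frac{n+1}{2n\mathrm{i}}$.
   Context: For a finite configuration $(p_{k,i})_{0\le k\le h,1\le i\le n_k}$ of type $(n_0,\ldots,n_h)$ with $n_0=n_h=1$: set $c_k=1/n_k$, $n_{-1}=n_{h+1}=0$, $u_{k,i}=p_{k,i}-p_{k,1}$, $\ell_k=p_{k,1}-p_{k-1,1}$; forces $F_{k,i}=2\sum_{j\neq i}\frac{c_k^2}{p_{k,i}-p_{k,j}}-\sum_{j=1}^{n_{k+1}}\frac{c_kc_{k+1}}{p_{k,i}-p_{k+1,j}}-\sum_{j=1}^{n_{k-1}}\frac{c_kc_{k-1}}{p_{k,i}-p_{k-1,j}}$ and $G_k=\sum_{i=1}^{n_k}\sum_{j=1}^{n_{k-1}}\frac{c_kc_{k-1}}{p_{k,i}-p_{k-1,j}}$ ($1\le k\le h$). Balanced means $F_{k,i}=0$ for $1\le k\le h-1$; the residual force is $F_{0,1}$; non-degenerate means the differential of the map $(\ell_1,u_{1,2},\ldots,u_{1,n_1},\ell_2,\ldots,\ell_h)\mapsto(G_1,F_{1,2},\ldots,F_{1,n_1},G_2,\ldots,G_h)$ is an isomorphism. Here $h=2$, so the map is $(\ell_1,u_{1,2},\ldots,u_{1,n},\ell_2)\mapsto(G_1,F_{1,2},\ldots,F_{1,n},G_2)$.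 *)

theory Defs
  imports "HOL-Analysis.Analysis" "Jordan_Normal_Form.Determinant"
begin

text \<open>A finite configuration of height h and type (n_0,...,n_h) is given by
  p :: nat => nat => complex (p k i for 0 <= k <= h, 1 <= i <= n_k) and the type
  nn :: nat => nat.\<close>

definition ntype :: "nat \<Rightarrow> (nat \<Rightarrow> nat) \<Rightarrow> nat \<Rightarrow> nat" where
  "ntype h nn k = (if k \<le> h then nn k else 0)"

definition cc :: "nat \<Rightarrow> (nat \<Rightarrow> nat) \<Rightarrow> nat \<Rightarrow> complex" where
  "cc h nn k = 1 / of_nat (ntype h nn k)"

text \<open>Force F_{k,i}.  The lower-level sum is empty for k = 0 (n_{-1} = 0).\<close>
definition force :: "nat \<Rightarrow> (nat \<Rightarrow> nat) \<Rightarrow> (nat \<Rightarrow> nat \<Rightarrow> complex) \<Rightarrow> nat \<Rightarrow> nat \<Rightarrow> complex" where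
  "force h nn p k i =
     2 * (\<Sum>j\<in>{1..ntype h nn k} - {i}. (cc h nn k)^2 / (p k i - p k j))
     - (\<Sum>j\<in>{1..ntype h nn (k+1)}. cc h nn k * cc h nn (k+1) / (p k i - p (k+1) j))
     - (if k = 0 then 0 else
        (\<Sum>j\<in>{1..ntype h nn (k-1)}. cc h nn k * cc h nn (k-1) / (p k i - p (k-1) j)))"

definition Gforce :: "nat \<Rightarrow> (nat \<Rightarrow> nat) \<Rightarrow> (nat \<Rightarrow> nat \<Rightarrow> complex) \<Rightarrow> nat \<Rightarrow> complex" where
  "Gforce h nn p k =
     (\<Sum>i\<in>{1..ntype h nn k}. \<Sum>j\<in>{1..ntype h nn (k-1)}.
        cc h nn k * cc h nn (k-1) / (p k i - p (k-1) j))"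

definition balanced :: "nat \<Rightarrow> (nat \<Rightarrow> nat) \<Rightarrow> (nat \<Rightarrow> nat \<Rightarrow> complex) \<Rightarrow> bool" where
  "balanced h nn p \<longleftrightarrow> (\<forall>k i. 1 \<le> k \<and> k \<le> h - 1 \<and> 1 \<le> i \<and> i \<le> nn k \<longrightarrow> force h nn p k i = 0)"

definition residual_force :: "nat \<Rightarrow> (nat \<Rightarrow> nat) \<Rightarrow> (nat \<Rightarrow> nat \<Rightarrow> complex) \<Rightarrow> complex" where
  "residual_force h nn p = force h nn p 0 1"

text \<open>Coordinates x :: nat => complex indexed by 0..n:
  x 0 = l_1, x (i-1) = u_{1,i} for 2 <= i <= n, x n = l_2.\<close>
definition type1n1 :: "nat \<Rightarrow> nat \<Rightarrow> nat" where
  "type1n1 n k = (if k = 1 then n else 1)"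

definition rebuild2 :: "nat \<Rightarrow> complex \<Rightarrow> (nat \<Rightarrow> complex) \<Rightarrow> nat \<Rightarrow> nat \<Rightarrow> complex" where
  "rebuild2 n p01 x k i =
     (if k = 0 then p01
      else if k = 1 then (if i = 1 then p01 + x 0 else p01 + x 0 + x (i - 1))
      else p01 + x 0 + x n)"

definition coord_map2 :: "nat \<Rightarrow> complex \<Rightarrow> (nat \<Rightarrow> complex) \<Rightarrow> nat \<Rightarrow> complex" where
  "coord_map2 n p01 x a =
     (let q = rebuild2 n p01 x in
      if a = 0 then Gforce 2 (type1n1 n) q 1
      else if a < n then force 2 (type1n1 n) q 1 (a + 1)
      else Gforce 2 (type1n1 n) q 2)"

definition coords2 :: "nat \<Rightarrow> (nat \<Rightarrow> nat \<Rightarrow> complex) \<Rightarrow> nat \<Rightarrow> complex" where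
  "coords2 n p a =
     (if a = 0 then p 1 1 - p 0 1
      else if a < n then p 1 (a + 1) - p 1 1
      else p 2 1 - p 1 1)"

definition nondegenerate2 :: "nat \<Rightarrow> (nat \<Rightarrow> nat \<Rightarrow> complex) \<Rightarrow> bool" where
  "nondegenerate2 n p \<longleftrightarrow>
     (\<exists>J :: nat \<Rightarrow> nat \<Rightarrow> complex.
        (\<forall>a\<le>n. \<forall>b\<le>n.
           ((\<lambda>z. coord_map2 n (p 0 1) ((coords2 n p)(b := z)) a) has_field_derivative J a b)
             (at (coords2 n p b)))
        \<and> det (mat (n+1) (n+1) (\<lambda>(a,b). J a b)) \<noteq> 0)"

definition example_config :: "nat \<Rightarrow> nat \<Rightarrow> nat \<Rightarrow> complex" where
  "example_config n k j =
     (if k = 0 then 0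
      else if k = 1 then \<i> + complex_of_real (cot (real j * pi / real (n + 1)))
      else 2 * \<i>)"

end

theory Submission
  imports Defs
begin


definition al :: "nat \<Rightarrow> real" where "al n = pi / real (n+1)"

lemma ang_bounds:
  assumes "1 \<le> j" "j \<le> n"
  shows "0 < real j * al n" "real j * al n < pi"
proof -
  have "0 < real j * pi / real (n+1)" using assms by simp
  thus "0 < real j * al n" by (simp add: al_def)
  have "real j < real (n+1)" using assms by simp
  hence "real j * pi < real (n+1) * pi" by simp
  hence "real j * pi / real (n+1) < pi" by (simp add: divide_less_eq mult.commute)
  thus "real j * al n < pi" by (simp add: al_def)
qed

lemma sin_ang_pos: "1 \<le> j \<Longrightarrow> j \<le> n \<Longrightarrow> sin (real j * al n) > 0"
  using ang_bounds by (simp add: sin_gt_zero)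

lemma refl_ang: "m \<le> n + 1 \<Longrightarrow> real (n + 1 - m) * al n = pi - real m * al n"
proof -
  assume m: "m \<le> n + 1"
  have "real (n+1) * al n = pi" by (simp add: al_def)
  moreover have "real (n + 1 - m) = real (n+1) - real m" using m by (simp add: of_nat_diff)
  ultimately show ?thesis by (simp add: left_diff_distrib)
qed

lemma cot_refl: "m \<le> n + 1 \<Longrightarrow> cot (real (n + 1 - m) * al n) = - cot (real m * al n)"
proof -
  assume m: "m \<le> n + 1"
  show ?thesis unfolding refl_ang[OF m] by (simp add: cot_def)
qed

lemma cot_refl': "m \<le> n + 1 \<Longrightarrow> cot ((real (Suc n) - real m) * al n) = - cot (real m * al n)"
  using cot_refl[of m n] by (simp add: of_nat_diff)

lemma cot_refl'': "m \<le> n + 1 \<Longrightarrow> cot ((1 + real n - real m) * al n) = - cot (real m * al n)"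
  using cot_refl'[of m n] by (simp add: add.commute)

lemma cot_sum0: "(\<Sum>m=1..n. cot (real m * al n)) = 0"
proof -
  have "(\<Sum>m=1..n. cot (real m * al n)) = (\<Sum>m=1..n. cot (real (n + 1 - m) * al n))"
    using sum.atLeastAtMost_rev[of "\<lambda>m. cot (real m * al n)" 1 n] by (simp add: add.commute)
  also have "\<dots> = - (\<Sum>m=1..n. cot (real m * al n))"
    by (subst sum_negf[symmetric], rule sum.cong) (auto simp: cot_refl'')
  finally show ?thesis by simp
qed

lemma cot_sum_excl:
  assumes i: "1 \<le> i" "i \<le> n"
  shows "(\<Sum>j\<in>{1..n}-{i}. cot ((real j - real i) * al n)) = cot (real i * al n)"
proof -
  let ?f = "\<lambda>m. cot (real m * al n)"
  have split: "{1..n}-{i} = {1..<i} \<union> {i+1..n}" using i by auto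
  have A: "(\<Sum>j\<in>{1..<i}. cot ((real j - real i) * al n)) = - (\<Sum>m\<in>{1..<i}. ?f m)"
  proof -
    have "(\<Sum>j\<in>{1..<i}. cot ((real j - real i) * al n)) = (\<Sum>j\<in>{1..<i}. - ?f (i - j))"
    proof (intro sum.cong refl)
      fix j assume j: "j \<in> {1..<i}"
      have "(real j - real i) * al n = - (real (i - j) * al n)" using j by (simp add: of_nat_diff algebra_simps)
      thus "cot ((real j - real i) * al n) = - ?f (i - j)" by simp
    qed
    also have "\<dots> = - (\<Sum>j\<in>{1..<i}. ?f (i - j))" by (simp add: sum_negf)
    also have "(\<Sum>j\<in>{1..<i}. ?f (i - j)) = (\<Sum>m\<in>{1..<i}. ?f m)"
      by (rule sum.reindex_bij_witness[where i="\<lambda>m. i - m" and j="\<lambda>m. i - m"]) auto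
    finally show ?thesis by (simp add: sum_negf)
  qed
  have B: "(\<Sum>j\<in>{i+1..n}. cot ((real j - real i) * al n)) = - (\<Sum>m\<in>{i+1..n}. ?f m)"
  proof -
    have "(\<Sum>j\<in>{i+1..n}. cot ((real j - real i) * al n)) = (\<Sum>j\<in>{i+1..n}. - ?f (n + 1 + i - j))"
    proof (intro sum.cong refl)
      fix j assume j: "j \<in> {i+1..n}"
      have e1: "(real j - real i) * al n = real (j - i) * al n" using j by (simp add: of_nat_diff)
      have e2: "n + 1 + i - j = n + 1 - (j - i)" using j by auto
      have "j - i \<le> n + 1" using j by auto
      from cot_refl[OF this] have "cot (real (j - i) * al n) = - ?f (n + 1 - (j - i))" by linarith
      thus "cot ((real j - real i) * al n) = - ?f (n + 1 + i - j)"
        by (simp only: e1 e2)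
    qed
    also have "\<dots> = - (\<Sum>j\<in>{i+1..n}. ?f (n + 1 + i - j))" by (simp add: sum_negf)
    also have "(\<Sum>j\<in>{i+1..n}. ?f (n + 1 + i - j)) = (\<Sum>m\<in>{i+1..n}. ?f m)"
      by (rule sum.reindex_bij_witness[where i="\<lambda>m. n + 1 + i - m" and j="\<lambda>m. n + 1 + i - m"]) auto
    finally show ?thesis .
  qed
  have C: "(\<Sum>m\<in>{1..n}. ?f m) = (\<Sum>m\<in>{1..<i}. ?f m) + ?f i + (\<Sum>m\<in>{i+1..n}. ?f m)"
  proof -
    have "{1..n} = insert i ({1..<i} \<union> {i+1..n})" using i by auto
    moreover have "(\<Sum>m\<in>{1..<i} \<union> {i+1..n}. ?f m) = (\<Sum>m\<in>{1..<i}. ?f m) + (\<Sum>m\<in>{i+1..n}. ?f m)"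
      by (rule sum.union_disjoint) auto
    ultimately show ?thesis by (simp add: algebra_simps)
  qed
  have D: "(\<Sum>j\<in>{1..n}-{i}. cot ((real j - real i) * al n)) =
     (\<Sum>j\<in>{1..<i}. cot ((real j - real i) * al n)) + (\<Sum>j\<in>{i+1..n}. cot ((real j - real i) * al n))"
    unfolding split by (rule sum.union_disjoint) auto
  show ?thesis using A B C D cot_sum0[of n] by linarith
qed

lemma inv_cot_diff:
  fixes a b :: real
  assumes "sin a \<noteq> 0" "sin b \<noteq> 0" "sin (b - a) \<noteq> 0"
  shows "1 / (cot a - cot b) = sin a * (cos a + sin a * cot (b - a))"
proof -
  have e: "sin (b - a) = sin b * cos a - cos b * sin a" by (simp add: sin_diff)
  have e2: "cos (b - a) = cos b * cos a + sin b * sin a" by (simp add: cos_diff)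
  have "cot a - cot b = sin (b - a) / (sin a * sin b)"
    using assms by (simp add: cot_def e field_simps)
  moreover have "sin a * (cos a + sin a * cot (b - a)) = sin a * sin b / sin (b - a)"
  proof -
    have "cos a + sin a * cot (b - a) = (cos a * sin (b-a) + sin a * cos (b - a)) / sin (b - a)"
      using assms by (simp add: cot_def field_simps)
    also have "cos a * sin (b-a) + sin a * cos (b - a) = sin b * (cos a * cos a + sin a * sin a)"
      unfolding e e2 by (simp only: algebra_simps)
    also have "cos a * cos a + sin a * sin a = 1" by (simp add: sin_cos_squared_add3)
    finally show ?thesis by simp
  qed
  ultimately show ?thesis using assms by simp
qed

lemma sin_diff_ne:
  assumes "i \<in> {1..n}" "j \<in> {1..n}" "i \<noteq> j"
  shows "sin (real j * al n - real i * al n) \<noteq> 0"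
proof
  assume h: "sin (real j * al n - real i * al n) = 0"
  have "0 \<le> real i * al n" "real i * al n < pi" "0 \<le> real j * al n" "real j * al n < pi"
    using ang_bounds[of i n] ang_bounds[of j n] assms by auto
  hence "real j * al n - real i * al n = 0"
    by (intro sin_eq_0_pi[OF _ _ h]) auto
  moreover have "al n > 0" by (simp add: al_def)
  ultimately have "real j = real i" by simp
  thus False using assms by simp
qed

definition xs :: "nat \<Rightarrow> nat \<Rightarrow> real" where "xs n j = cot (real j * al n)"

lemma cot_sq: "sin t \<noteq> 0 \<Longrightarrow> 1 + cot t ^ 2 = 1 / sin t ^ 2"
proof -
  assume s: "sin t \<noteq> 0"
  have "1 + cot t ^ 2 = (sin t ^ 2 + cos t ^ 2) / sin t ^ 2"
    using s by (simp add: cot_def field_simps power_divide)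
  thus ?thesis by simp
qed

lemma xs_balance:
  assumes i: "i \<in> {1..n}"
  shows "(\<Sum>j\<in>{1..n}-{i}. 1 / (xs n i - xs n j)) = real n * xs n i / (1 + xs n i ^ 2)"
proof -
  let ?a = "real i * al n"
  have sa: "sin ?a \<noteq> 0" using sin_ang_pos[of i n] i by auto
  have "(\<Sum>j\<in>{1..n}-{i}. 1 / (xs n i - xs n j)) =
        (\<Sum>j\<in>{1..n}-{i}. sin ?a * cos ?a + sin ?a ^ 2 * cot ((real j - real i) * al n))"
  proof (intro sum.cong refl)
    fix j assume j: "j \<in> {1..n} - {i}"
    have sb: "sin (real j * al n) \<noteq> 0" using sin_ang_pos[of j n] j by auto
    have sd: "sin (real j * al n - ?a) \<noteq> 0" using sin_diff_ne[of i n j] i j by auto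
    show "1 / (xs n i - xs n j) = sin ?a * cos ?a + sin ?a ^ 2 * cot ((real j - real i) * al n)"
      unfolding xs_def inv_cot_diff[OF sa sb sd]
      by (simp add: left_diff_distrib power2_eq_square algebra_simps)
  qed
  also have "\<dots> = real (n - 1) * (sin ?a * cos ?a) + sin ?a ^ 2 * cot ?a"
  proof -
    have cs: "(\<Sum>j\<in>{1..n}-{i}. cot ((real j - real i) * al n)) = cot ?a" using cot_sum_excl[of i n] i by auto
    have "card ({1..n}-{i}) = n - 1" using i by auto
    thus ?thesis using cs by (simp add: sum.distrib sum_distrib_left[symmetric])
  qed
  also have "\<dots> = real n * (sin ?a * cos ?a)"
    using i sa by (simp add: cot_def power2_eq_square of_nat_diff algebra_simps)
  also have "real n * (sin ?a * cos ?a) = real n * xs n i / (1 + xs n i ^ 2)"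
    using sa by (simp add: xs_def cot_sq) (simp add: cot_def power2_eq_square)
  finally show ?thesis .
qed

lemma tele_cos: "(\<Sum>j=1..m. 2 * sin a * cos (2 * real j * a)) = sin ((2 * real m + 1) * a) - sin a"
proof (induction m)
  case 0 then show ?case by simp
next
  case (Suc m)
  have "2 * sin a * cos (2 * real (Suc m) * a) = sin ((2 * real (Suc m) + 1) * a) - sin ((2 * real m + 1) * a)"
  proof -
    have "(2 * real (Suc m) + 1) * a = 2 * real (Suc m) * a + a"
         "(2 * real m + 1) * a = 2 * real (Suc m) * a - a" by (simp_all add: algebra_simps)
    thus ?thesis by (simp only: sin_add sin_diff) (simp add: algebra_simps)
  qed
  with Suc show ?case by simp
qed

lemma sum_sin_sq:
  assumes n: "n \<ge> 1"
  shows "(\<Sum>j=1..n. 1 / (1 + xs n j ^ 2)) = (real n + 1) / 2"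
proof -
  let ?a = "al n"
  have sa: "sin ?a > 0" using sin_ang_pos[of 1 n] n by auto
  have "(2 * real n + 1) * ?a = 2 * pi - ?a" by (simp add: al_def field_simps)
  hence "sin ((2 * real n + 1) * ?a) = - sin ?a" by (simp add: sin_diff)
  with tele_cos[of ?a n] have "(\<Sum>j=1..n. 2 * sin ?a * cos (2 * real j * ?a)) = - 2 * sin ?a" by simp
  hence "2 * sin ?a * (\<Sum>j=1..n. cos (2 * real j * ?a)) = 2 * sin ?a * (-1)"
    by (simp add: sum_distrib_left[symmetric] mult.assoc)
  hence C: "(\<Sum>j=1..n. cos (2 * real j * ?a)) = -1" using sa by (metis mult_cancel_left less_irrefl mult_zero_right zero_less_mult_iff zero_less_numeral)
  have "(\<Sum>j=1..n. 1 / (1 + xs n j ^ 2)) = (\<Sum>j=1..n. (1 - cos (2 * real j * ?a)) / 2)"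
  proof (intro sum.cong refl)
    fix j assume j: "j \<in> {1..n}"
    have s: "sin (real j * ?a) \<noteq> 0" using sin_ang_pos[of j n] j by auto
    have "cos (2 * real j * ?a) = 1 - 2 * sin (real j * ?a) ^ 2"
      using cos_double_sin[of "real j * ?a"] by (simp add: mult.assoc)
    thus "1 / (1 + xs n j ^ 2) = (1 - cos (2 * real j * ?a)) / 2"
      using s by (simp add: xs_def cot_sq)
  qed
  also have "\<dots> = (real n - (\<Sum>j=1..n. cos (2 * real j * ?a))) / 2"
    by (simp add: sum_divide_distrib[symmetric] sum_subtractf)
  finally show ?thesis using C by simp
qed

lemma sum_sin_cos:
  "(\<Sum>j=1..n. xs n j / (1 + xs n j ^ 2)) = 0"
proof -
  let ?g = "\<lambda>j. xs n j / (1 + xs n j ^ 2)"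
  have r: "?g (Suc n - j) = - ?g j" if "j \<le> n + 1" for j
    using cot_refl[OF that] by (simp add: xs_def power2_eq_square)
  have "(\<Sum>j=1..n. ?g j) = (\<Sum>j=1..n. ?g (n + 1 - j))"
    using sum.atLeastAtMost_rev[of ?g 1 n] by (simp add: add.commute)
  also have "\<dots> = (\<Sum>j=1..n. - ?g j)"
    by (rule sum.cong) (auto simp: r simp del: of_nat_add of_nat_Suc)
  finally show ?thesis by (simp add: sum_negf)
qed



lemma sum_swap_offdiag:
  assumes "finite I"
  shows "(\<Sum>i\<in>I. \<Sum>j\<in>I-{i}. f i j) = (\<Sum>i\<in>I. \<Sum>j\<in>I-{i}. f j i)"
proof -
  have e: "(\<Sum>j\<in>I-{i}. h j) = (\<Sum>j\<in>I. if j = i then 0 else h j)" for i and h :: "'a \<Rightarrow> 'b"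
    using assms by (simp add: sum.If_cases Diff_eq Compl_eq)
  have "(\<Sum>i\<in>I. \<Sum>j\<in>I-{i}. f i j) = (\<Sum>i\<in>I. \<Sum>j\<in>I. if j = i then 0 else f i j)"
    by (simp add: e)
  also have "\<dots> = (\<Sum>j\<in>I. \<Sum>i\<in>I. if j = i then 0 else f i j)" by (rule sum.swap)
  also have "\<dots> = (\<Sum>j\<in>I. \<Sum>i\<in>I. if i = j then 0 else f i j)"
    by (intro sum.cong refl) auto
  also have "\<dots> = (\<Sum>i\<in>I. \<Sum>j\<in>I-{i}. f j i)" by (simp add: e)
  finally show ?thesis .
qed

definition Gp :: "real \<Rightarrow> real \<Rightarrow> real \<Rightarrow> real \<Rightarrow> real" where
  "Gp a b ui uj = -2 * ((1+a^2)*ui) * ((1+a^2)*ui - (1+b^2)*uj) / (a-b)^2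
      + 4*a*(1+a^2)*ui^2/(a-b) - 2*(1+a^2)*ui^2"

lemma Gp_pair:
  assumes "a \<noteq> b"
  shows "Gp a b ui uj + Gp b a uj ui = -2 * (ui-uj)^2 * (1+a^2)*(1+b^2)/(a-b)^2"
proof -
  have d: "a - b \<noteq> 0" "b - a \<noteq> 0" using assms by auto
  have D: "(a-b)^2 \<noteq> 0" using d by simp
  have sq: "(b-a)^2 = (a-b)^2" by (simp add: power2_commute)
  have q1: "y / (a-b) = y*(a-b)/(a-b)^2" for y using d by (simp add: power2_eq_square)
  have q2: "y / (b-a) = -(y*(a-b))/(a-b)^2" for y
  proof -
    have "y / (b-a) = -(y/(a-b))" using d by (simp add: field_simps)
    thus ?thesis using q1[of y] by simp
  qed
  have q3: "y = y*(a-b)^2/(a-b)^2" for y using D by simp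
  have e1: "Gp a b ui uj = (-2 * ((1+a^2)*ui) * ((1+a^2)*ui - (1+b^2)*uj)
      + 4*a*(1+a^2)*ui^2*(a-b) - 2*(1+a^2)*ui^2*(a-b)^2) / (a-b)^2"
    unfolding Gp_def
    by (subst q1, subst q3[of "2*(1+a^2)*ui^2"]) (simp only: add_divide_distrib diff_divide_distrib)
  have e2: "Gp b a uj ui = (-2 * ((1+b^2)*uj) * ((1+b^2)*uj - (1+a^2)*ui)
      - 4*b*(1+b^2)*uj^2*(a-b) - 2*(1+b^2)*uj^2*(a-b)^2) / (a-b)^2"
    unfolding Gp_def sq
    by (subst q2, subst q3[of "2*(1+b^2)*uj^2"]) (simp only: add_divide_distrib diff_divide_distrib diff_conv_add_uminus minus_divide_left)
  have p: "(-2 * ((1+a^2)*ui) * ((1+a^2)*ui - (1+b^2)*uj)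
      + 4*a*(1+a^2)*ui^2*(a-b) - 2*(1+a^2)*ui^2*(a-b)^2) + (-2 * ((1+b^2)*uj) * ((1+b^2)*uj - (1+a^2)*ui)
      - 4*b*(1+b^2)*uj^2*(a-b) - 2*(1+b^2)*uj^2*(a-b)^2) = -2 * (ui-uj)^2 * (1+a^2)*(1+b^2)"
    by (simp add: algebra_simps power2_eq_square)
  show ?thesis unfolding e1 e2 add_divide_distrib[symmetric] p by simp
qed

lemma Gp_pair_le:
  assumes "a \<noteq> b"
  shows "Gp a b ui uj + Gp b a uj ui \<le> 0"
proof -
  have "0 \<le> (ui-uj)^2 * (1+a^2)*(1+b^2)/(a-b)^2" by simp
  thus ?thesis unfolding Gp_pair[OF assms] by simp
qed

lemma abs_idY:
  fixes n Y U A XX :: real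
  assumes n: "n \<ge> 1" and p: "Y > 0" and XX: "XX = Y - 1"
  shows "(Y*U) * (-2/n*A + 2*(XX-1)/Y^2*(Y*U)) =
    -2/n*Y*U^2 + 1/n*(-2*(Y*U)*A + 4*XX*Y*U^2*n/Y - (n-1)*(2*Y*U^2))"
  using n p unfolding XX by (simp add: field_simps power2_eq_square)
lemma abs_id:
  fixes n X U A :: real
  assumes n: "n \<ge> 1" and p: "1 + X^2 > 0"
  shows "((1+X^2)*U) * (-2/n*A + 2*(X^2-1)/(X^2+1)^2*((1+X^2)*U)) =
    -2/n*(1+X^2)*U^2 + 1/n*(-2*((1+X^2)*U)*A + 4*X*(1+X^2)*U^2*(n*X/(1+X^2)) - (n-1)*(2*(1+X^2)*U^2))"
proof -
  have e: "4*X*(1+X^2)*U^2*(n*X/(1+X^2)) = 4*X^2*(1+X^2)*U^2*n/(1+X^2)"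
    by (simp add: power2_eq_square)
  show ?thesis unfolding e using abs_idY[OF n p, of "X^2" U A] by (simp add: add.commute)
qed

definition Hr :: "nat set \<Rightarrow> (nat \<Rightarrow> real) \<Rightarrow> (nat \<Rightarrow> real) \<Rightarrow> nat \<Rightarrow> real" where
  "Hr I x r i = -2 / real (card I) * (\<Sum>j\<in>I-{i}. (r i - r j)/(x i - x j)^2)
      + 2*(x i^2 - 1)/(x i^2 + 1)^2 * r i"

lemma Hr_per_i:
  assumes fin: "finite I" and ne: "card I \<ge> 1" and i: "i \<in> I"
    and inj: "\<forall>j\<in>I. j \<noteq> i \<longrightarrow> x j \<noteq> x i"
    and bal: "(\<Sum>j\<in>I-{i}. 1 / (x i - x j)) = real (card I) * x i / (1 + x i ^ 2)"
  shows "r i * Hr I x r i = -2 / real (card I) * (1 + x i^2) * (r i / (1 + x i^2))^2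
     + 1 / real (card I) * (\<Sum>j\<in>I-{i}. Gp (x i) (x j) (r i / (1 + x i^2)) (r j / (1 + x j^2)))"
proof -
  define n where "n = real (card I)"
  define u where "u k = r k / (1 + x k^2)" for k
  have pos: "1 + x k ^ 2 > 0" for k by (simp add: add_pos_nonneg)
  have r: "r k = (1 + x k^2) * u k" for k using pos[of k] by (simp add: u_def)
  have n1: "n \<ge> 1" using ne by (simp add: n_def)
  have cd: "card (I - {i}) = card I - 1" using fin i by simp
  have Gs: "(\<Sum>j\<in>I-{i}. Gp (x i) (x j) (u i) (u j)) =
     -2 * r i * (\<Sum>j\<in>I-{i}. (r i - r j)/(x i - x j)^2)
     + 4*x i*(1+x i^2)*u i^2 * (\<Sum>j\<in>I-{i}. 1 / (x i - x j))
     - (n - 1) * (2*(1+x i^2)*u i^2)"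
  proof -
    have "(\<Sum>j\<in>I-{i}. Gp (x i) (x j) (u i) (u j)) =
      (\<Sum>j\<in>I-{i}. -2 * r i * ((r i - r j)/(x i - x j)^2)
          + 4*x i*(1+x i^2)*u i^2 * (1 / (x i - x j)) - 2*(1+x i^2)*u i^2)"
      by (intro sum.cong refl) (simp add: Gp_def r)
    also have "\<dots> = -2 * r i * (\<Sum>j\<in>I-{i}. (r i - r j)/(x i - x j)^2)
     + 4*x i*(1+x i^2)*u i^2 * (\<Sum>j\<in>I-{i}. 1 / (x i - x j))
     - real (card (I-{i})) * (2*(1+x i^2)*u i^2)"
      by (simp add: sum.distrib sum_subtractf sum_distrib_left sum_negf)
    finally show ?thesis using cd ne by (simp add: n_def of_nat_diff)
  qed
  define SA where "SA = (\<Sum>j\<in>I-{i}. (r i - r j)/(x i - x j)^2)"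
  have H: "Hr I x r i = -2/n*SA + 2*(x i^2-1)/(x i^2+1)^2*((1+x i^2)*u i)"
    unfolding Hr_def SA_def n_def by (simp only: r[of i, symmetric])
  have G2: "(\<Sum>j\<in>I-{i}. Gp (x i) (x j) (u i) (u j)) =
     -2*((1+x i^2)*u i)*SA + 4*x i*(1+x i^2)*u i^2*(n*x i/(1+x i^2)) - (n-1)*(2*(1+x i^2)*u i^2)"
    unfolding Gs SA_def bal n_def by (simp only: r[of i, symmetric])
  have "r i * Hr I x r i = -2 / n * (1 + x i^2) * u i^2
      + 1 / n * (\<Sum>j\<in>I-{i}. Gp (x i) (x j) (u i) (u j))"
    unfolding H G2 r[of i] by (rule abs_id[OF n1 pos[of i]])
  thus ?thesis unfolding u_def n_def .
qed

lemma Hr_kernel: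
  assumes fin: "finite I" and ne: "card I \<ge> 1"
    and inj: "inj_on x I"
    and bal: "\<forall>i\<in>I. (\<Sum>j\<in>I-{i}. 1 / (x i - x j)) = real (card I) * x i / (1 + x i ^ 2)"
    and ker: "\<forall>i\<in>I. Hr I x r i = 0"
  shows "\<forall>i\<in>I. r i = 0"
proof -
  define n where "n = real (card I)"
  define u where "u k = r k / (1 + x k^2)" for k
  have pos: "1 + x k ^ 2 > 0" for k by (simp add: add_pos_nonneg)
  have n1: "n \<ge> 1" using ne by (simp add: n_def)
  let ?g = "\<lambda>i j. Gp (x i) (x j) (u i) (u j)"
  have per: "0 = -2 / n * (1 + x i^2) * u i^2 + 1 / n * (\<Sum>j\<in>I-{i}. ?g i j)" if "i \<in> I" for i
    using Hr_per_i[OF fin ne that, of x r] ker that inj bal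
    by (auto simp: u_def n_def inj_on_def)
  have S: "(\<Sum>i\<in>I. \<Sum>j\<in>I-{i}. ?g i j) \<le> 0"
  proof -
    have "2 * (\<Sum>i\<in>I. \<Sum>j\<in>I-{i}. ?g i j) = (\<Sum>i\<in>I. \<Sum>j\<in>I-{i}. ?g i j) + (\<Sum>i\<in>I. \<Sum>j\<in>I-{i}. ?g j i)"
      using sum_swap_offdiag[OF fin, of ?g] by simp
    also have "\<dots> = (\<Sum>i\<in>I. \<Sum>j\<in>I-{i}. ?g i j + ?g j i)" by (simp add: sum.distrib)
    also have "\<dots> \<le> 0"
    proof (intro sum_nonpos)
      fix i j assume "i \<in> I" "j \<in> I - {i}"
      hence "x i \<noteq> x j" using inj by (auto simp: inj_on_def)
      thus "?g i j + ?g j i \<le> 0" by (rule Gp_pair_le)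
    qed
    finally show ?thesis by simp
  qed
  have T: "(\<Sum>i\<in>I. (1 + x i^2) * u i^2) = 1/2 * (\<Sum>i\<in>I. \<Sum>j\<in>I-{i}. ?g i j)"
  proof -
    have "(\<Sum>i\<in>I. (1 + x i^2) * u i^2) = (\<Sum>i\<in>I. 1/2 * (\<Sum>j\<in>I-{i}. ?g i j))"
    proof (intro sum.cong refl)
      fix i assume "i \<in> I"
      from per[OF this] n1 show "(1 + x i^2) * u i^2 = 1/2 * (\<Sum>j\<in>I-{i}. ?g i j)"
        by (simp add: field_simps)
    qed
    thus ?thesis by (simp add: sum_distrib_left)
  qed
  have nn: "\<forall>i\<in>I. 0 \<le> (1 + x i^2) * u i^2" using pos by (simp add: less_imp_le)
  have "(\<Sum>i\<in>I. (1 + x i^2) * u i^2) \<le> 0" using T S by simp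
  moreover have "0 \<le> (\<Sum>i\<in>I. (1 + x i^2) * u i^2)" by (rule sum_nonneg) (use nn in auto)
  ultimately have "(\<Sum>i\<in>I. (1 + x i^2) * u i^2) = 0" by linarith
  moreover have "(\<Sum>i\<in>I. (1 + x i^2) * u i^2) = 0 \<longleftrightarrow> (\<forall>i\<in>I. (1 + x i^2) * u i^2 = 0)"
    by (rule sum_nonneg_eq_0_iff[OF fin]) (use nn in auto)
  ultimately have z: "\<forall>i\<in>I. (1 + x i^2) * u i^2 = 0" by simp
  show ?thesis
  proof
    fix i assume i: "i \<in> I"
    have "1 + x i^2 \<noteq> 0" using pos[of i] by simp
    have "(1 + x i^2) * u i^2 = 0" using z i by blast
    with \<open>1 + x i^2 \<noteq> 0\<close> have "u i = 0" by simp
    thus "r i = 0" using pos[of i] by (simp add: u_def)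
  qed
qed



lemma cx_ne: "complex_of_real x + \<i> \<noteq> 0" "complex_of_real x - \<i> \<noteq> 0"
  by (auto simp: complex_eq_iff)

lemma cx_ne': "complex_of_real x \<noteq> \<i>" "\<i> + complex_of_real x \<noteq> 0"
  by (auto simp: complex_eq_iff)

lemma inv2_gen: "(A::complex) \<noteq> 0 \<Longrightarrow> B \<noteq> 0 \<Longrightarrow> 1/A^2 + 1/B^2 = (B^2 + A^2)/(A*B)^2"
  by (simp add: field_simps power2_eq_square)

lemma inv1_gen: "(A::complex) \<noteq> 0 \<Longrightarrow> B \<noteq> 0 \<Longrightarrow> 1/A = B/(A*B)"
  by simp

lemma cprod: "(complex_of_real x + \<i>) * (complex_of_real x - \<i>) = complex_of_real (x^2 + 1)"
  by (simp add: algebra_simps power2_eq_square)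

lemma cinv1: "1/(complex_of_real x - \<i>) + 1/(complex_of_real x + \<i>) = complex_of_real (2*x/(x^2+1))"
proof -
  have "1/(complex_of_real x - \<i>) + 1/(complex_of_real x + \<i>) =
        ((complex_of_real x + \<i>) + (complex_of_real x - \<i>)) / ((complex_of_real x + \<i>) * (complex_of_real x - \<i>))"
    using cx_ne[of x] by (simp add: field_simps)
  also have "\<dots> = complex_of_real (2*x) / complex_of_real (x^2 + 1)" unfolding cprod by simp
  finally show ?thesis by simp
qed

lemma cinv2: "1/(complex_of_real x - \<i>)^2 + 1/(complex_of_real x + \<i>)^2 = complex_of_real (2*(x^2-1)/(x^2+1)^2)"
proof -
  have "1/(complex_of_real x - \<i>)^2 + 1/(complex_of_real x + \<i>)^2 =
        ((complex_of_real x + \<i>)^2 + (complex_of_real x - \<i>)^2) / ((complex_of_real x + \<i>) * (complex_of_real x - \<i>))^2"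
    using inv2_gen[OF cx_ne(2) cx_ne(1), of x x] by (simp add: mult.commute)
  also have "(complex_of_real x + \<i>)^2 + (complex_of_real x - \<i>)^2 = complex_of_real (2*(x^2-1))"
    by (simp add: algebra_simps power2_eq_square)
  also have "((complex_of_real x + \<i>) * (complex_of_real x - \<i>))^2 = complex_of_real ((x^2+1)^2)"
    unfolding cprod by simp
  finally show ?thesis by simp
qed

lemma cinv3: "1/(complex_of_real x + \<i>) = complex_of_real (x/(1+x^2)) - \<i> * complex_of_real (1/(1+x^2))"
proof -
  have "1/(complex_of_real x + \<i>) = (complex_of_real x - \<i>) / ((complex_of_real x + \<i>) * (complex_of_real x - \<i>))"
    by (rule inv1_gen[OF cx_ne(1) cx_ne(2)])
  also have "\<dots> = (complex_of_real x - \<i>) / complex_of_real (1 + x^2)" unfolding cprod by (simp add: add.commute)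
  also have "\<dots> = complex_of_real (x/(1+x^2)) - \<i> * complex_of_real (1/(1+x^2))"
    by (simp add: diff_divide_distrib)
  finally show ?thesis .
qed

lemma xs_inj:
  assumes "i \<in> {1..n}" "j \<in> {1..n}" "i \<noteq> j"
  shows "xs n i \<noteq> xs n j"
proof
  assume h: "xs n i = xs n j"
  have si: "sin (real i * al n) \<noteq> 0" "sin (real j * al n) \<noteq> 0"
    using sin_ang_pos[of i n] sin_ang_pos[of j n] assms by auto
  have "sin (real j * al n - real i * al n) = sin (real j * al n) * cos (real i * al n) - cos (real j * al n) * sin (real i * al n)"
    by (simp add: sin_diff)
  also have "\<dots> = 0" using h si unfolding xs_def cot_def by (simp add: field_simps)
  finally show False using sin_diff_ne[OF assms] by simp
qed

definition Pc :: "nat \<Rightarrow> nat \<Rightarrow> complex" where "Pc n i = \<i> + complex_of_real (xs n i)"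

lemma Pc_alt: "Pc n i = complex_of_real (xs n i) + \<i>" by (simp add: Pc_def add.commute)
lemma Pc_2i: "Pc n i - 2 * \<i> = complex_of_real (xs n i) - \<i>" by (simp add: Pc_def)
lemma Pc_diff: "Pc n i - Pc n j = complex_of_real (xs n i - xs n j)" by (simp add: Pc_def)
lemma Pc_ne0: "Pc n i \<noteq> 0" by (simp add: Pc_alt cx_ne)
lemma Pc_ne2i: "Pc n i - 2 * \<i> \<noteq> 0" by (simp add: Pc_2i cx_ne')

lemma sumP:
  assumes n: "n \<ge> 1"
  shows "(\<Sum>i=1..n. 1 / Pc n i) = - \<i> * complex_of_real ((real n + 1)/2)"
proof -
  have "(\<Sum>i=1..n. 1 / Pc n i) = (\<Sum>i=1..n. complex_of_real (xs n i/(1+xs n i^2)) - \<i> * complex_of_real (1/(1+xs n i^2)))"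
    unfolding Pc_alt cinv3 ..
  also have "\<dots> = complex_of_real (\<Sum>i=1..n. xs n i/(1+xs n i^2)) - \<i> * complex_of_real (\<Sum>i=1..n. 1/(1+xs n i^2))"
    by (simp only: sum_subtractf sum_distrib_left of_real_sum)
  also have "\<dots> = - \<i> * complex_of_real ((real n + 1)/2)"
    unfolding sum_sin_cos[of n] sum_sin_sq[OF n] by simp
  finally show ?thesis .
qed

lemma balC:
  assumes i: "i \<in> {1..n}"
  shows "2 * (1 / of_nat n)^2 * (\<Sum>j\<in>{1..n}-{i}. 1 / (Pc n i - Pc n j)) - (1 / of_nat n) / (Pc n i - 2*\<i>) - (1 / of_nat n) / Pc n i = 0"
proof -
  have n: "n \<ge> 1" using i by auto
  have "(\<Sum>j\<in>{1..n}-{i}. 1 / (Pc n i - Pc n j)) = complex_of_real (\<Sum>j\<in>{1..n}-{i}. 1 / (xs n i - xs n j))"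
    unfolding Pc_diff by simp
  also have "\<dots> = complex_of_real (real n * xs n i / (1 + xs n i ^ 2))" using xs_balance[OF i] by simp
  finally have S: "(\<Sum>j\<in>{1..n}-{i}. 1 / (Pc n i - Pc n j)) = complex_of_real (real n * xs n i / (1 + xs n i ^ 2))" .
  have T: "(1 / of_nat n) / (Pc n i - 2*\<i>) + (1 / of_nat n) / Pc n i = (1 / of_nat n) * complex_of_real (2*xs n i/(xs n i^2+1))"
  proof -
    have "(1 / of_nat n) / (Pc n i - 2*\<i>) + (1 / of_nat n) / Pc n i = (1 / of_nat n) * (1/(Pc n i - 2*\<i>) + 1 / Pc n i)"
      by (simp add: distrib_left)
    also have "1/(Pc n i - 2*\<i>) + 1 / Pc n i = complex_of_real (2*xs n i/(xs n i^2+1))"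
      unfolding Pc_2i unfolding Pc_alt by (rule cinv1)
    finally show ?thesis .
  qed
  have "2 * (1 / of_nat n)^2 * complex_of_real (real n * xs n i / (1 + xs n i ^ 2)) = (1 / of_nat n) * complex_of_real (2*xs n i/(xs n i^2+1))"
    using n by (simp add: field_simps power2_eq_square)
  thus ?thesis using S T by (simp add: algebra_simps)
qed

definition Fl :: "nat \<Rightarrow> (nat \<Rightarrow> complex) \<Rightarrow> complex \<Rightarrow> nat \<Rightarrow> complex" where
  "Fl n d dQ i = -2 * (1/of_nat n)^2 * (\<Sum>j\<in>{1..n}-{i}. (d i - d j)/(Pc n i - Pc n j)^2)
     + (1/of_nat n) * ((d i - dQ)/(Pc n i - 2*\<i>)^2) + (1/of_nat n) * (d i/(Pc n i)^2)"

lemma Pc_inj: "i \<in> {1..n} \<Longrightarrow> j \<in> {1..n} \<Longrightarrow> i \<noteq> j \<Longrightarrow> Pc n i - Pc n j \<noteq> 0"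
  using xs_inj[of i n j] by (simp add: Pc_diff)

lemma antisym0: "(\<Sum>i\<in>{1..n}. \<Sum>j\<in>{1..n}-{i}. (d i - d j)/(Pc n i - Pc n j)^2) = 0"
proof -
  let ?f = "\<lambda>i j. (d i - d j)/(Pc n i - Pc n j)^2"
  have "(\<Sum>i\<in>{1..n}. \<Sum>j\<in>{1..n}-{i}. ?f i j) = (\<Sum>i\<in>{1..n}. \<Sum>j\<in>{1..n}-{i}. ?f j i)"
    by (rule sum_swap_offdiag) simp
  also have "\<dots> = (\<Sum>i\<in>{1..n}. \<Sum>j\<in>{1..n}-{i}. - ?f i j)"
  proof (intro sum.cong refl)
    fix i j
    have e1: "(Pc n j - Pc n i)^2 = (Pc n i - Pc n j)^2" by (rule power2_commute)
    have e2: "d j - d i = -(d i - d j)" by simp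
    show "?f j i = - ?f i j" unfolding e1 e2 by (rule minus_divide_left[symmetric])
  qed
  also have "\<dots> = - (\<Sum>i\<in>{1..n}. \<Sum>j\<in>{1..n}-{i}. ?f i j)" by (simp add: sum_negf)
  finally show ?thesis by simp
qed

lemma Fl_sum: "(\<Sum>i\<in>{1..n}. Fl n d dQ i) =
   (1/of_nat n) * (\<Sum>i\<in>{1..n}. (d i - dQ)/(Pc n i - 2*\<i>)^2) + (1/of_nat n) * (\<Sum>i\<in>{1..n}. d i/(Pc n i)^2)"
proof -
  have "(\<Sum>i\<in>{1..n}. Fl n d dQ i) = -2 * (1/of_nat n)^2 * (\<Sum>i\<in>{1..n}. \<Sum>j\<in>{1..n}-{i}. (d i - d j)/(Pc n i - Pc n j)^2)
     + (1/of_nat n) * (\<Sum>i\<in>{1..n}. (d i - dQ)/(Pc n i - 2*\<i>)^2) + (1/of_nat n) * (\<Sum>i\<in>{1..n}. d i/(Pc n i)^2)"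
    unfolding Fl_def by (simp add: sum.distrib sum_distrib_left times_divide_eq_right)
  also have "\<dots> = -2 * (1/of_nat n)^2 * 0
     + (1/of_nat n) * (\<Sum>i\<in>{1..n}. (d i - dQ)/(Pc n i - 2*\<i>)^2) + (1/of_nat n) * (\<Sum>i\<in>{1..n}. d i/(Pc n i)^2)"
    by (simp only: antisym0)
  finally show ?thesis by simp
qed

lemma gen_split: "(D::complex) \<noteq> 0 \<Longrightarrow> x/D^2 = (x - t*D)/D^2 + t*(1/D)"
  by (simp add: field_simps power2_eq_square)

lemma Fl_lin:
  assumes i: "i \<in> {1..n}"
  shows "Fl n d (t * (2*\<i>)) i = Fl n (\<lambda>j. d j - t * Pc n j) 0 i"
proof -
  let ?c = "1/of_nat n :: complex"
  let ?d = "\<lambda>j. d j - t * Pc n j"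
  have A: "(\<Sum>j\<in>{1..n}-{i}. (d i - d j)/(Pc n i - Pc n j)^2) =
        (\<Sum>j\<in>{1..n}-{i}. (?d i - ?d j)/(Pc n i - Pc n j)^2) + t * (\<Sum>j\<in>{1..n}-{i}. 1/(Pc n i - Pc n j))"
  proof -
    have "(\<Sum>j\<in>{1..n}-{i}. (d i - d j)/(Pc n i - Pc n j)^2) =
        (\<Sum>j\<in>{1..n}-{i}. (?d i - ?d j)/(Pc n i - Pc n j)^2 + t * (1/(Pc n i - Pc n j)))"
    proof (intro sum.cong refl)
      fix j assume j: "j \<in> {1..n}-{i}"
      have D: "Pc n i - Pc n j \<noteq> 0" using Pc_inj[OF i, of j] j by auto
      have e: "?d i - ?d j = (d i - d j) - t * (Pc n i - Pc n j)" by (simp add: algebra_simps)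
      show "(d i - d j)/(Pc n i - Pc n j)^2 = (?d i - ?d j)/(Pc n i - Pc n j)^2 + t * (1/(Pc n i - Pc n j))"
        unfolding e by (rule gen_split[OF D])
    qed
    thus ?thesis by (simp add: sum.distrib sum_distrib_left)
  qed
  have B: "(d i - t * (2*\<i>))/(Pc n i - 2*\<i>)^2 = (?d i - 0)/(Pc n i - 2*\<i>)^2 + t * (1/(Pc n i - 2*\<i>))"
  proof -
    have e: "?d i - 0 = (d i - t * (2*\<i>)) - t * (Pc n i - 2*\<i>)" by (simp add: algebra_simps)
    show ?thesis unfolding e by (rule gen_split[OF Pc_ne2i])
  qed
  have C: "d i/(Pc n i)^2 = ?d i/(Pc n i)^2 + t * (1/Pc n i)"
  proof -
    show ?thesis by (rule gen_split[OF Pc_ne0])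
  qed
  have K: "2 * ?c^2 * (\<Sum>j\<in>{1..n}-{i}. 1 / (Pc n i - Pc n j)) - ?c / (Pc n i - 2*\<i>) - ?c / Pc n i = 0"
    by (rule balC[OF i])
  let ?SA = "(\<Sum>j\<in>{1..n}-{i}. (?d i - ?d j)/(Pc n i - Pc n j)^2)"
  let ?SB = "(\<Sum>j\<in>{1..n}-{i}. 1/(Pc n i - Pc n j))"
  have F1: "Fl n d (t * (2*\<i>)) i = -2 * ?c^2 * (?SA + t * ?SB)
     + ?c * ((?d i - 0)/(Pc n i - 2*\<i>)^2 + t * (1/(Pc n i - 2*\<i>)))
     + ?c * (?d i/(Pc n i)^2 + t * (1/Pc n i))"
    unfolding Fl_def by (simp only: A B C)
  have F2: "Fl n ?d 0 i = -2 * ?c^2 * ?SA + ?c * ((?d i - 0)/(Pc n i - 2*\<i>)^2) + ?c * (?d i/(Pc n i)^2)"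
    unfolding Fl_def ..
  have Kc: "2 * ?c^2 * ?SB - ?c * (1/(Pc n i - 2*\<i>)) - ?c * (1/Pc n i) = 0"
    using K by simp
  have gen: "-2*c^2*(SA + t*SB) + c*(X + t*Y) + c*(Z + t*W) = (-2*c^2*SA + c*X + c*Z) - t*(2*c^2*SB - c*Y - c*W)"
    for c SA SB X Y Z W :: complex by (simp add: algebra_simps)
  show ?thesis unfolding F1 F2 gen Kc by simp
qed

definition Hc :: "nat \<Rightarrow> (nat \<Rightarrow> complex) \<Rightarrow> nat \<Rightarrow> complex" where
  "Hc n d i = complex_of_real (-2/real n) * (\<Sum>j\<in>{1..n}-{i}. (d i - d j)/complex_of_real ((xs n i - xs n j)^2))
     + complex_of_real (2*(xs n i^2-1)/(xs n i^2+1)^2) * d i"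

lemma Fl_real: "Fl n d 0 i = (1/of_nat n) * Hc n d i"
proof -
  have S: "(\<Sum>j\<in>{1..n}-{i}. (d i - d j)/(Pc n i - Pc n j)^2) = (\<Sum>j\<in>{1..n}-{i}. (d i - d j)/complex_of_real ((xs n i - xs n j)^2))"
    by (simp only: Pc_diff of_real_power)
  have T: "(1/of_nat n) * ((d i - 0)/(Pc n i - 2*\<i>)^2) + (1/of_nat n) * (d i/(Pc n i)^2)
        = (1/of_nat n) * d i * (1/(complex_of_real (xs n i) - \<i>)^2 + 1/(complex_of_real (xs n i) + \<i>)^2)"
    unfolding Pc_2i Pc_alt by (simp add: algebra_simps)
  have c: "-2 * (1/of_nat n :: complex)^2 = (1/of_nat n) * complex_of_real (-2/real n)"
    by (simp add: power2_eq_square)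
  have "Fl n d 0 i = -2 * (1/of_nat n)^2 * (\<Sum>j\<in>{1..n}-{i}. (d i - d j)/complex_of_real ((xs n i - xs n j)^2))
     + ((1/of_nat n) * ((d i - 0)/(Pc n i - 2*\<i>)^2) + (1/of_nat n) * (d i/(Pc n i)^2))"
    by (simp only: Fl_def S add.assoc)
  also have "\<dots> = -2 * (1/of_nat n)^2 * (\<Sum>j\<in>{1..n}-{i}. (d i - d j)/complex_of_real ((xs n i - xs n j)^2))
     + (1/of_nat n) * d i * complex_of_real (2*(xs n i^2-1)/(xs n i^2+1)^2)"
    by (simp only: T cinv2)
  also have "\<dots> = (1/of_nat n) * Hc n d i" unfolding Hc_def c by (simp add: algebra_simps)
  finally show ?thesis .
qed

lemma Re_Hc: "Re (Hc n d i) = Hr {1..n} (xs n) (\<lambda>j. Re (d j)) i"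
  unfolding Hc_def Hr_def by simp

lemma Im_Hc: "Im (Hc n d i) = Hr {1..n} (xs n) (\<lambda>j. Im (d j)) i"
  unfolding Hc_def Hr_def by simp

lemma Hc_kernel:
  assumes n: "n \<ge> 1" and ker: "\<forall>i\<in>{1..n}. Hc n d i = 0"
  shows "\<forall>i\<in>{1..n}. d i = 0"
proof -
  have inj: "inj_on (xs n) {1..n}" unfolding inj_on_def using xs_inj[of _ n] by blast
  have bal: "\<forall>i\<in>{1..n}. (\<Sum>j\<in>{1..n}-{i}. 1 / (xs n i - xs n j)) = real (card {1..n}) * xs n i / (1 + xs n i ^ 2)"
    using xs_balance by simp
  have c: "card {1..n} \<ge> 1" using n by simp
  have kR: "\<forall>i\<in>{1..n}. Hr {1..n} (xs n) (\<lambda>j. Re (d j)) i = 0"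
  proof
    fix i assume "i \<in> {1..n}"
    hence "Re (Hc n d i) = 0" using ker by simp
    thus "Hr {1..n} (xs n) (\<lambda>j. Re (d j)) i = 0" by (simp only: Re_Hc)
  qed
  have kI: "\<forall>i\<in>{1..n}. Hr {1..n} (xs n) (\<lambda>j. Im (d j)) i = 0"
  proof
    fix i assume "i \<in> {1..n}"
    hence "Im (Hc n d i) = 0" using ker by simp
    thus "Hr {1..n} (xs n) (\<lambda>j. Im (d j)) i = 0" by (simp only: Im_Hc)
  qed
  have R: "\<forall>i\<in>{1..n}. Re (d i) = 0" by (rule Hr_kernel[OF _ c inj bal kR]) simp
  have I: "\<forall>i\<in>{1..n}. Im (d i) = 0" by (rule Hr_kernel[OF _ c inj bal kI]) simp
  show ?thesis using R I by (simp add: complex_eq_iff)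
qed

lemma core:
  assumes n: "n \<ge> 1"
    and hG1: "(\<Sum>i\<in>{1..n}. d i/(Pc n i)^2) = 0"
    and hG2: "(\<Sum>i\<in>{1..n}. (d i - dQ)/(Pc n i - 2*\<i>)^2) = 0"
    and hF: "\<forall>i\<in>{2..n}. Fl n d dQ i = 0"
  shows "(\<forall>i\<in>{1..n}. d i = 0) \<and> dQ = 0"
proof -
  have "(\<Sum>i\<in>{1..n}. Fl n d dQ i) = 0" unfolding Fl_sum hG1 hG2 by simp
  moreover have "{1..n} = insert 1 {2..n}" using n by auto
  moreover have "(\<Sum>i\<in>{2..n}. Fl n d dQ i) = 0" using hF by simp
  ultimately have "Fl n d dQ 1 = 0" by simp
  hence Fall: "\<forall>i\<in>{1..n}. Fl n d dQ i = 0" using hF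
    by (metis atLeastAtMost_iff le_antisym not_less_eq_eq one_add_one plus_1_eq_Suc)
  define t where "t = dQ / (2*\<i>)"
  have dQ: "dQ = t * (2*\<i>)" by (simp add: t_def field_simps)
  define d' where "d' j = d j - t * Pc n j" for j
  have F': "\<forall>i\<in>{1..n}. Fl n d' 0 i = 0"
    using Fall Fl_lin[of _ n d t] unfolding dQ d'_def by (metis (no_types))
  have "\<forall>i\<in>{1..n}. Hc n d' i = 0"
    using F' n by (simp add: Fl_real)
  hence z: "\<forall>i\<in>{1..n}. d' i = 0" by (rule Hc_kernel[OF n])
  hence dd: "\<forall>i\<in>{1..n}. d i = t * Pc n i" by (simp add: d'_def)
  have "(\<Sum>i\<in>{1..n}. d i/(Pc n i)^2) = t * (\<Sum>i\<in>{1..n}. 1 / Pc n i)"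
    unfolding sum_distrib_left
    by (intro sum.cong refl) (simp add: dd power2_eq_square Pc_ne0)
  also have "\<dots> = t * (- \<i> * complex_of_real ((real n + 1)/2))" using sumP[OF n] by simp
  moreover have ne: "complex_of_nat n + 1 \<noteq> 0"
  proof -
    have "complex_of_nat n + 1 = of_nat (Suc n)" by simp
    also have "\<dots> \<noteq> 0" by (simp only: of_nat_eq_0_iff)
    finally show ?thesis .
  qed
  ultimately have "t = 0" using hG1 by simp
  thus ?thesis using dd dQ by simp
qed



lemma dterm:
  fixes a p1 p2 e1 e2 z0 :: complex
  assumes "p1 - p2 \<noteq> 0"
  shows "((\<lambda>z. a / ((p1 + (z - z0) * e1) - (p2 + (z - z0) * e2))) has_field_derivative
          (- a / (p1 - p2)^2 * (e1 - e2))) (at z0)"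
proof -
  have "((\<lambda>z. a / ((p1 + (z - z0) * e1) - (p2 + (z - z0) * e2))) has_field_derivative
          (- (a * ((1 - 0) * e1 - (1 - 0) * e2)) / ((p1 + (z0 - z0) * e1) - (p2 + (z0 - z0) * e2))^2)) (at z0)"
    using assms by (auto intro!: derivative_eq_intros simp: power2_eq_square)
  thus ?thesis by (rule DERIV_cong) (use assms in \<open>simp add: divide_simps algebra_simps\<close>)
qed

definition dforce :: "nat \<Rightarrow> (nat \<Rightarrow> nat) \<Rightarrow> (nat \<Rightarrow> nat \<Rightarrow> complex) \<Rightarrow> (nat \<Rightarrow> nat \<Rightarrow> complex) \<Rightarrow> nat \<Rightarrow> nat \<Rightarrow> complex" where
  "dforce h nn p e k i =
     2 * (\<Sum>j\<in>{1..ntype h nn k} - {i}. (- ((cc h nn k)^2) / (p k i - p k j)^2) * (e k i - e k j))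
     - (\<Sum>j\<in>{1..ntype h nn (k+1)}. (- (cc h nn k * cc h nn (k+1)) / (p k i - p (k+1) j)^2) * (e k i - e (k+1) j))
     - (if k = 0 then 0 else
        (\<Sum>j\<in>{1..ntype h nn (k-1)}. (- (cc h nn k * cc h nn (k-1)) / (p k i - p (k-1) j)^2) * (e k i - e (k-1) j)))"

definition dGforce :: "nat \<Rightarrow> (nat \<Rightarrow> nat) \<Rightarrow> (nat \<Rightarrow> nat \<Rightarrow> complex) \<Rightarrow> (nat \<Rightarrow> nat \<Rightarrow> complex) \<Rightarrow> nat \<Rightarrow> complex" where
  "dGforce h nn p e k =
     (\<Sum>i\<in>{1..ntype h nn k}. \<Sum>j\<in>{1..ntype h nn (k-1)}.
        (- (cc h nn k * cc h nn (k-1)) / (p k i - p (k-1) j)^2) * (e k i - e (k-1) j))"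

lemma dforce_deriv:
  assumes d0: "\<forall>j\<in>{1..ntype h nn k} - {i}. p k i - p k j \<noteq> 0"
    and d1: "\<forall>j\<in>{1..ntype h nn (k+1)}. p k i - p (k+1) j \<noteq> 0"
    and d2: "k \<noteq> 0 \<longrightarrow> (\<forall>j\<in>{1..ntype h nn (k-1)}. p k i - p (k-1) j \<noteq> 0)"
  shows "((\<lambda>z. force h nn (\<lambda>k i. p k i + (z - z0) * e k i) k i) has_field_derivative dforce h nn p e k i) (at z0)"
proof (cases "k = 0")
  case True
  show ?thesis unfolding force_def dforce_def if_P[OF True]
    apply (intro DERIV_diff DERIV_cmult DERIV_sum dterm DERIV_const)
    using d0 d1 by auto
next
  case False
  show ?thesis unfolding force_def dforce_def if_not_P[OF False]
    apply (intro DERIV_diff DERIV_cmult DERIV_sum dterm)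
    using d0 d1 d2 False by auto
qed

lemma dGforce_deriv:
  assumes "\<forall>i\<in>{1..ntype h nn k}. \<forall>j\<in>{1..ntype h nn (k-1)}. p k i - p (k-1) j \<noteq> 0"
  shows "((\<lambda>z. Gforce h nn (\<lambda>k i. p k i + (z - z0) * e k i) k) has_field_derivative dGforce h nn p e k) (at z0)"
  unfolding Gforce_def dGforce_def
  apply (intro DERIV_sum dterm)
  using assms by auto



lemma lin_helper:
  fixes w :: "nat \<Rightarrow> complex" and B S :: "nat set"
  assumes "finite B"
  shows "(\<Sum>b\<in>B. w b * (\<Sum>j\<in>S. c j * (g b - h b j))) = (\<Sum>j\<in>S. c j * ((\<Sum>b\<in>B. w b * g b) - (\<Sum>b\<in>B. w b * h b j)))"
proof -
  have "(\<Sum>b\<in>B. w b * (\<Sum>j\<in>S. c j * (g b - h b j))) = (\<Sum>b\<in>B. \<Sum>j\<in>S. c j * (w b * g b - w b * h b j))"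
    by (simp add: sum_distrib_left algebra_simps)
  also have "\<dots> = (\<Sum>j\<in>S. \<Sum>b\<in>B. c j * (w b * g b - w b * h b j))" by (rule sum.swap)
  also have "\<dots> = (\<Sum>j\<in>S. c j * ((\<Sum>b\<in>B. w b * g b) - (\<Sum>b\<in>B. w b * h b j)))"
    by (simp add: sum_distrib_left sum_subtractf right_diff_distrib)
  finally show ?thesis .
qed

lemma dforce_lin:
  fixes B :: "nat set"
  assumes "finite B"
  shows "(\<Sum>b\<in>B. w b * dforce h nn p (E b) k i) = dforce h nn p (\<lambda>k i. \<Sum>b\<in>B. w b * E b k i) k i"
proof -
  have L: "(\<Sum>b\<in>B. w b * (2 * X b - Y b - Z b)) = 2 * (\<Sum>b\<in>B. w b * X b) - (\<Sum>b\<in>B. w b * Y b) - (\<Sum>b\<in>B. w b * Z b)"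
    for X Y Z :: "nat \<Rightarrow> complex"
    by (simp add: sum_subtractf sum_distrib_left sum.distrib algebra_simps)
  show ?thesis
  proof (cases "k = 0")
    case True
    show ?thesis unfolding dforce_def if_P[OF True] L lin_helper[OF assms] by simp
  next
    case False
    show ?thesis unfolding dforce_def if_not_P[OF False] L lin_helper[OF assms] ..
  qed
qed

lemma dGforce_lin:
  fixes B :: "nat set"
  assumes "finite B"
  shows "(\<Sum>b\<in>B. w b * dGforce h nn p (E b) k) = dGforce h nn p (\<lambda>k i. \<Sum>b\<in>B. w b * E b k i) k"
proof -
  have "(\<Sum>b\<in>B. w b * dGforce h nn p (E b) k) =
    (\<Sum>i\<in>{1..ntype h nn k}. \<Sum>b\<in>B. w b * (\<Sum>j\<in>{1..ntype h nn (k-1)}.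
        (- (cc h nn k * cc h nn (k-1)) / (p k i - p (k-1) j)^2) * (E b k i - E b (k-1) j)))"
    unfolding dGforce_def sum_distrib_left by (rule sum.swap)
  thus ?thesis unfolding lin_helper[OF assms] dGforce_def .
qed

definition Ev :: "nat \<Rightarrow> nat \<Rightarrow> nat \<Rightarrow> nat \<Rightarrow> complex" where
  "Ev n b k i = (if k = 0 then 0 else if k = 1 then
     (if i = 1 then (if b = 0 then 1 else 0) else (if b = 0 then 1 else 0) + (if i - 1 = b then 1 else 0))
     else (if b = 0 then 1 else 0) + (if n = b then 1 else 0))"

lemma rebuild_upd:
  "rebuild2 n p01 (x(b:=z)) = (\<lambda>k i. rebuild2 n p01 x k i + (z - x b) * Ev n b k i)"
  by (intro ext) (auto simp: rebuild2_def Ev_def algebra_simps)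

lemma ex_vals:
  "example_config n 0 j = 0" "example_config n 1 j = Pc n j" "example_config n 2 j = 2*\<i>"
  by (simp_all add: example_config_def Pc_def xs_def al_def)

lemma nt_vals:
  "ntype 2 (type1n1 n) 0 = 1" "ntype 2 (type1n1 n) 1 = n" "ntype 2 (type1n1 n) 2 = 1"
  "cc 2 (type1n1 n) 0 = 1" "cc 2 (type1n1 n) 1 = 1 / of_nat n" "cc 2 (type1n1 n) 2 = 1"
  by (simp_all add: ntype_def type1n1_def cc_def)

lemma ex_vals':
  "k = 0 \<Longrightarrow> example_config n k j = 0" "k = 1 \<Longrightarrow> example_config n k j = Pc n j"
  "k = 2 \<Longrightarrow> example_config n k j = 2*\<i>"
  using ex_vals by simp_all

lemma nt_vals':
  "k = 0 \<Longrightarrow> ntype 2 (type1n1 n) k = 1" "k = 1 \<Longrightarrow> ntype 2 (type1n1 n) k = n"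
  "k = 2 \<Longrightarrow> ntype 2 (type1n1 n) k = 1"
  "k = 0 \<Longrightarrow> cc 2 (type1n1 n) k = 1" "k = 1 \<Longrightarrow> cc 2 (type1n1 n) k = 1 / of_nat n"
  "k = 2 \<Longrightarrow> cc 2 (type1n1 n) k = 1"
  using nt_vals by simp_all

definition Q0 :: "nat \<Rightarrow> nat \<Rightarrow> nat \<Rightarrow> complex" where
  "Q0 n = rebuild2 n (example_config n 0 1) (coords2 n (example_config n))"

lemma Q0_vals:
  assumes n: "n \<ge> 1"
  shows "Q0 n 0 j = 0" "i \<in> {1..n} \<Longrightarrow> Q0 n 1 i = Pc n i" "Q0 n 2 j = 2*\<i>"
proof -
  show "Q0 n 0 j = 0" by (simp add: Q0_def rebuild2_def ex_vals)
  show "Q0 n 2 j = 2*\<i>" using n by (simp add: Q0_def rebuild2_def ex_vals ex_vals' coords2_def)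
  assume i: "i \<in> {1..n}"
  show "Q0 n 1 i = Pc n i"
  proof (cases "i = 1")
    case True thus ?thesis by (simp add: Q0_def rebuild2_def ex_vals ex_vals' coords2_def)
  next
    case False
    hence "i - 1 \<noteq> 0" "i - 1 < n" "i - 1 + 1 = i" using i by auto
    thus ?thesis using False by (simp add: Q0_def rebuild2_def ex_vals ex_vals' coords2_def)
  qed
qed

lemma Q0_vals':
  assumes n: "n \<ge> 1"
  shows "k = 0 \<Longrightarrow> Q0 n k j = 0" "k = 1 \<Longrightarrow> i \<in> {1..n} \<Longrightarrow> Q0 n k i = Pc n i"
    "k = 2 \<Longrightarrow> Q0 n k j = 2*\<i>"
  using Q0_vals[OF n] by simp_all

lemma sum11: "sum f {1..1::nat} = f 1" by simp

lemma nt_exact: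
  "ntype 2 (type1n1 n) 1 = n" "ntype 2 (type1n1 n) (1+1) = 1" "ntype 2 (type1n1 n) (1-1) = 1"
  "ntype 2 (type1n1 n) (2-1) = n"
  "cc 2 (type1n1 n) 1 = 1 / of_nat n" "cc 2 (type1n1 n) (1+1) = 1" "cc 2 (type1n1 n) (1-1) = 1"
  "cc 2 (type1n1 n) 2 = 1" "cc 2 (type1n1 n) (2-1) = 1 / of_nat n" "ntype 2 (type1n1 n) 2 = 1"
  by (simp_all add: ntype_def type1n1_def cc_def)

lemma dG1_conc:
  assumes n: "n \<ge> 1"
  shows "dGforce 2 (type1n1 n) (Q0 n) e 1 = -(1/of_nat n) * (\<Sum>i\<in>{1..n}. (e 1 i - e 0 1)/(Pc n i)^2)"
proof -
  have q0: "Q0 n (1-1) j = 0" for j using Q0_vals'(1)[OF n] by simp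
  have "dGforce 2 (type1n1 n) (Q0 n) e 1 = (\<Sum>i\<in>{1..n}. (-(1/of_nat n * 1) / (Q0 n 1 i - 0)^2) * (e 1 i - e 0 1))"
    unfolding dGforce_def nt_exact sum11 q0 by simp
  also have "\<dots> = (\<Sum>i\<in>{1..n}. (-(1/of_nat n) / (Pc n i)^2) * (e 1 i - e 0 1))"
    by (intro sum.cong refl) (simp add: Q0_vals'(2)[OF n])
  finally show ?thesis by (simp add: sum_distrib_left)
qed

lemma dG2_conc:
  assumes n: "n \<ge> 1"
  shows "dGforce 2 (type1n1 n) (Q0 n) e 2 = -(1/of_nat n) * (\<Sum>j\<in>{1..n}. (e 2 1 - e 1 j)/(2*\<i> - Pc n j)^2)"
proof -
  have e21: "(2::nat) - 1 = 1" by simp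
  have "dGforce 2 (type1n1 n) (Q0 n) e 2 = (\<Sum>j\<in>{1..n}. (-(1 * (1/of_nat n)) / (Q0 n 2 1 - Q0 n 1 j)^2) * (e 2 1 - e 1 j))"
    unfolding dGforce_def nt_exact sum11 e21 ..
  also have "\<dots> = (\<Sum>j\<in>{1..n}. (-(1/of_nat n) / (2*\<i> - Pc n j)^2) * (e 2 1 - e 1 j))"
    by (intro sum.cong refl) (simp add: Q0_vals'(2)[OF n] Q0_vals(3)[OF n])
  finally show ?thesis by (simp add: sum_distrib_left)
qed

lemma dF_conc:
  assumes n: "n \<ge> 1" and i: "i \<in> {1..n}" and e0: "e 0 1 = 0"
  shows "dforce 2 (type1n1 n) (Q0 n) e 1 i = Fl n (e 1) (e 2 1) i"
proof -
  have q0: "Q0 n (1-1) j = 0" for j using Q0_vals'(1)[OF n] by simp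
  have q2: "Q0 n (1+1) j = 2*\<i>" for j by (rule Q0_vals'(3)[OF n]) simp
  have e11: "(1::nat) + 1 = 2" "(1::nat) - 1 = 0" by simp_all
  have S: "(\<Sum>j\<in>{1..n}-{i}. (- ((1/of_nat n)^2) / (Q0 n 1 i - Q0 n 1 j)^2) * (e 1 i - e 1 j))
     = -((1/of_nat n)^2) * (\<Sum>j\<in>{1..n}-{i}. (e 1 i - e 1 j)/(Pc n i - Pc n j)^2)"
    unfolding sum_distrib_left using i by (intro sum.cong refl) (simp add: Q0_vals'(2)[OF n])
  have "dforce 2 (type1n1 n) (Q0 n) e 1 i =
     2 * (\<Sum>j\<in>{1..n}-{i}. (- ((1/of_nat n)^2) / (Q0 n 1 i - Q0 n 1 j)^2) * (e 1 i - e 1 j))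
     - (- (1/of_nat n * 1) / (Q0 n 1 i - Q0 n (1+1) 1)^2) * (e 1 i - e (1+1) 1)
     - (- (1/of_nat n * 1) / (Q0 n 1 i - Q0 n (1-1) 1)^2) * (e 1 i - e (1-1) 1)"
    unfolding dforce_def nt_exact sum11 by simp
  also have "\<dots> = Fl n (e 1) (e 2 1) i"
    unfolding S unfolding q0 q2 unfolding e11 Fl_def Q0_vals(2)[OF n i] e0 by (simp add: algebra_simps diff_divide_distrib)
  finally show ?thesis .
qed

lemma sum_ind:
  fixes w :: "nat \<Rightarrow> complex"
  assumes "finite S"
  shows "(\<Sum>b\<in>S. w b * (if b = c then 1 else 0)) = (if c \<in> S then w c else 0)"
    "(\<Sum>b\<in>S. w b * (if c = b then 1 else 0)) = (if c \<in> S then w c else 0)"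
proof -
  have "(\<Sum>b\<in>S. w b * (if b = c then 1 else 0)) = (\<Sum>b\<in>S. if b = c then w b else 0)"
    by (intro sum.cong refl) auto
  thus "(\<Sum>b\<in>S. w b * (if b = c then 1 else 0)) = (if c \<in> S then w c else 0)"
    using assms by (simp add: sum.delta)
  have "(\<Sum>b\<in>S. w b * (if c = b then 1 else 0)) = (\<Sum>b\<in>S. if c = b then w b else 0)"
    by (intro sum.cong refl) auto
  thus "(\<Sum>b\<in>S. w b * (if c = b then 1 else 0)) = (if c \<in> S then w c else 0)"
    using assms by (simp add: sum.delta')
qed

lemma bal_force:
  assumes n: "n \<ge> 1" and i: "i \<in> {1..n}"
  shows "force 2 (type1n1 n) (example_config n) 1 i =
    2 * (1 / of_nat n)^2 * (\<Sum>j\<in>{1..n}-{i}. 1 / (Pc n i - Pc n j)) - (1 / of_nat n) / (Pc n i - 2*\<i>) - (1 / of_nat n) / Pc n i"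
proof -
  have e2: "example_config n (1+1) j = 2*\<i>" for j by (simp add: example_config_def)
  have e0: "example_config n (1-1) j = 0" for j by (simp add: example_config_def)
  have "force 2 (type1n1 n) (example_config n) 1 i =
     2 * (\<Sum>j\<in>{1..n}-{i}. (1/of_nat n)^2 / (example_config n 1 i - example_config n 1 j))
     - (1/of_nat n * 1) / (example_config n 1 i - example_config n (1+1) 1)
     - (1/of_nat n * 1) / (example_config n 1 i - example_config n (1-1) 1)"
    unfolding force_def nt_exact sum11 by simp
  also have "\<dots> = 2 * (1 / of_nat n)^2 * (\<Sum>j\<in>{1..n}-{i}. 1 / (Pc n i - Pc n j)) - (1 / of_nat n) / (Pc n i - 2*\<i>) - (1 / of_nat n) / Pc n i"
    unfolding e2 e0 ex_vals(2) by (simp add: sum_distrib_left)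
  finally show ?thesis .
qed

lemma residual_val:
  assumes n: "n \<ge> 1"
  shows "residual_force 2 (type1n1 n) (example_config n) = of_nat (n + 1) / (2 * of_nat n * \<i>)"
proof -
  have e1: "example_config n (0+1) j = Pc n j" for j using ex_vals(2)[of n j] by simp
  have nt: "ntype 2 (type1n1 n) 0 = 1" "ntype 2 (type1n1 n) (0+1) = n" "cc 2 (type1n1 n) 0 = 1"
     "cc 2 (type1n1 n) (0+1) = 1/of_nat n"
    by (simp_all add: ntype_def type1n1_def cc_def)
  have "residual_force 2 (type1n1 n) (example_config n) =
     2 * (\<Sum>j\<in>{1..1}-{1}. 1 / (example_config n 0 1 - example_config n 0 j))
     - (\<Sum>j\<in>{1..n}. 1 * (1/of_nat n) / (0 - Pc n j)) - 0"
    unfolding residual_force_def force_def nt e1 ex_vals(1) by (simp add: power2_eq_square)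
  also have "\<dots> = (1/of_nat n) * (\<Sum>j\<in>{1..n}. 1 / Pc n j)"
    by (simp add: sum_distrib_left sum_negf)
  also have "\<dots> = (1/of_nat n) * (- \<i> * complex_of_real ((real n + 1)/2))"
    using sumP[OF n] by simp
  also have "\<dots> = of_nat (n + 1) / (2 * of_nat n * \<i>)"
    using n by (simp add: field_simps)
  finally show ?thesis .
qed

lemma balanced_ex:
  assumes n: "n \<ge> 1"
  shows "balanced 2 (type1n1 n) (example_config n)"
  unfolding balanced_def
proof (intro allI impI)
  fix k i assume h: "1 \<le> k \<and> k \<le> 2 - 1 \<and> 1 \<le> i \<and> i \<le> type1n1 n k"
  hence k: "k = 1" by simp
  hence i: "i \<in> {1..n}" using h by (simp add: type1n1_def)
  show "force 2 (type1n1 n) (example_config n) k i = 0"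
    unfolding k bal_force[OF n i] by (rule balC[OF i])
qed

definition Jm :: "nat \<Rightarrow> nat \<Rightarrow> nat \<Rightarrow> complex" where
  "Jm n a b = (if a = 0 then dGforce 2 (type1n1 n) (Q0 n) (Ev n b) 1
     else if a < n then dforce 2 (type1n1 n) (Q0 n) (Ev n b) 1 (a+1)
     else dGforce 2 (type1n1 n) (Q0 n) (Ev n b) 2)"

lemma Jm_deriv:
  assumes n: "n \<ge> 1" and a: "a \<le> n" and b: "b \<le> n"
  shows "((\<lambda>z. coord_map2 n (example_config n 0 1) ((coords2 n (example_config n))(b := z)) a)
          has_field_derivative Jm n a b) (at (coords2 n (example_config n) b))"
proof -
  let ?X = "coords2 n (example_config n)"
  let ?q = "\<lambda>z k i. Q0 n k i + (z - ?X b) * Ev n b k i"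
  have f: "coord_map2 n (example_config n 0 1) (?X(b := z)) a =
     (if a = 0 then Gforce 2 (type1n1 n) (?q z) 1 else if a < n then force 2 (type1n1 n) (?q z) 1 (a + 1)
      else Gforce 2 (type1n1 n) (?q z) 2)" for z
    unfolding coord_map2_def Let_def rebuild_upd Q0_def ..
  show ?thesis
  proof (cases "a = 0")
    case True
    have "((\<lambda>z. Gforce 2 (type1n1 n) (?q z) 1) has_field_derivative dGforce 2 (type1n1 n) (Q0 n) (Ev n b) 1) (at (?X b))"
      by (rule dGforce_deriv) (simp add: ntype_def type1n1_def Q0_vals'[OF n] Pc_ne0)
    thus ?thesis unfolding f Jm_def using True by simp
  next
    case False
    show ?thesis
    proof (cases "a < n")
      case True
      have i: "a + 1 \<in> {1..n}" using True by simp
      have "((\<lambda>z. force 2 (type1n1 n) (?q z) 1 (a+1)) has_field_derivative dforce 2 (type1n1 n) (Q0 n) (Ev n b) 1 (a+1)) (at (?X b))"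
      proof (rule dforce_deriv)
        show "\<forall>j\<in>{1..ntype 2 (type1n1 n) 1} - {a + 1}. Q0 n 1 (a + 1) - Q0 n 1 j \<noteq> 0"
        proof
          fix j assume j: "j \<in> {1..ntype 2 (type1n1 n) 1} - {a + 1}"
          hence j': "j \<in> {1..n}" "j \<noteq> a + 1" unfolding nt_exact by auto
          show "Q0 n 1 (a + 1) - Q0 n 1 j \<noteq> 0"
            unfolding Q0_vals(2)[OF n i] Q0_vals(2)[OF n j'(1)] using Pc_inj[OF i j'(1)] j'(2) by auto
        qed
        show "\<forall>j\<in>{1..ntype 2 (type1n1 n) (1 + 1)}. Q0 n 1 (a + 1) - Q0 n (1 + 1) j \<noteq> 0"
          unfolding Q0_vals(2)[OF n i] nt_exact using Pc_ne2i[of n "a+1"] by (simp add: Q0_vals'(3)[OF n])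
        show "1 \<noteq> 0 \<longrightarrow> (\<forall>j\<in>{1..ntype 2 (type1n1 n) (1 - 1)}. Q0 n 1 (a + 1) - Q0 n (1 - 1) j \<noteq> 0)"
          unfolding Q0_vals(2)[OF n i] nt_exact using Pc_ne0[of n "a+1"] by (simp add: Q0_vals'(1)[OF n])
      qed
      thus ?thesis unfolding f Jm_def using True False by simp
    next
      case F2: False
      have "((\<lambda>z. Gforce 2 (type1n1 n) (?q z) 2) has_field_derivative dGforce 2 (type1n1 n) (Q0 n) (Ev n b) 2) (at (?X b))"
      proof (rule dGforce_deriv)
        have "Q0 n 2 1 - Q0 n 1 j \<noteq> 0" if "j \<in> {1..n}" for j
        proof -
          have "Pc n j \<noteq> 2*\<i>" using Pc_ne2i[of n j] by simp
          thus ?thesis unfolding Q0_vals(3)[OF n] Q0_vals(2)[OF n that] by simp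
        qed
        thus "\<forall>i\<in>{1..ntype 2 (type1n1 n) 2}. \<forall>j\<in>{1..ntype 2 (type1n1 n) (2 - 1)}. Q0 n 2 i - Q0 n (2 - 1) j \<noteq> 0"
          unfolding nt_exact sum11 by auto
      qed
      thus ?thesis unfolding f Jm_def using False F2 by simp
    qed
  qed
qed

lemma Jm_det:
  assumes n: "n \<ge> 1"
  shows "det (mat (n+1) (n+1) (\<lambda>(a,b). Jm n a b)) \<noteq> 0"
proof
  let ?M = "mat (n+1) (n+1) (\<lambda>(a,b). Jm n a b)"
  have M: "?M \<in> carrier_mat (n+1) (n+1)" by simp
  assume "det ?M = 0"
  then obtain v where v: "v \<in> carrier_vec (n+1)" "v \<noteq> 0\<^sub>v (n+1)" "?M *\<^sub>v v = 0\<^sub>v (n+1)"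
    using det_0_iff_vec_prod_zero_field[OF M] by blast
  define w where "w b = v $ b" for b
  define ev where "ev = (\<lambda>k i. \<Sum>b\<in>{0..<n+1}. w b * Ev n b k i)"
  have dv: "dim_vec v = n + 1" using v(1) by simp
  have rowz: "(\<Sum>b\<in>{0..<n+1}. w b * Jm n a b) = 0" if a: "a < n+1" for a
  proof -
    have "(?M *\<^sub>v v) $ a = 0" using v(3) a by simp
    moreover have "(?M *\<^sub>v v) $ a = (\<Sum>b\<in>{0..<n+1}. Jm n a b * v $ b)"
      using a dv by (simp add: scalar_prod_def)
    ultimately show ?thesis by (simp add: w_def mult.commute)
  qed
  have lin: "(\<Sum>b\<in>{0..<n+1}. w b * Jm n a b) =
     (if a = 0 then dGforce 2 (type1n1 n) (Q0 n) ev 1 else if a < n then dforce 2 (type1n1 n) (Q0 n) ev 1 (a+1)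
      else dGforce 2 (type1n1 n) (Q0 n) ev 2)" for a
  proof (cases "a = 0")
    case True
    show ?thesis unfolding Jm_def ev_def if_P[OF True] by (rule dGforce_lin) simp
  next
    case False
    show ?thesis
    proof (cases "a < n")
      case True
      show ?thesis unfolding Jm_def ev_def if_not_P[OF False] if_P[OF True] by (rule dforce_lin) simp
    next
      case F2: False
      show ?thesis unfolding Jm_def ev_def if_not_P[OF False] if_not_P[OF F2] by (rule dGforce_lin) simp
    qed
  qed
  have ev0: "ev 0 1 = 0" by (simp add: ev_def Ev_def)
  have ev11: "ev 1 1 = w 0" by (simp add: ev_def Ev_def sum_ind)
  have ev1i: "ev 1 i = w 0 + w (i - 1)" if "2 \<le> i" "i \<le> n" for i
    using that by (simp add: ev_def Ev_def sum.distrib distrib_left sum_ind)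
  have ev2: "ev 2 1 = w 0 + w n" by (simp add: ev_def Ev_def sum.distrib distrib_left sum_ind)
  have hG1: "(\<Sum>i\<in>{1..n}. ev 1 i/(Pc n i)^2) = 0"
  proof -
    have "dGforce 2 (type1n1 n) (Q0 n) ev 1 = 0" using rowz[of 0] lin[of 0] by simp
    thus ?thesis unfolding dG1_conc[OF n] ev0 using n by simp
  qed
  have hG2: "(\<Sum>i\<in>{1..n}. (ev 1 i - ev 2 1)/(Pc n i - 2*\<i>)^2) = 0"
  proof -
    have "dGforce 2 (type1n1 n) (Q0 n) ev 2 = 0" using rowz[of n] lin[of n] n by simp
    hence "(\<Sum>j\<in>{1..n}. (ev 2 1 - ev 1 j)/(2*\<i> - Pc n j)^2) = 0" unfolding dG2_conc[OF n] using n by simp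
    moreover have "(\<Sum>i\<in>{1..n}. (ev 1 i - ev 2 1)/(Pc n i - 2*\<i>)^2) = - (\<Sum>j\<in>{1..n}. (ev 2 1 - ev 1 j)/(2*\<i> - Pc n j)^2)"
      unfolding sum_negf[symmetric]
    proof (intro sum.cong refl)
      fix j
      have e1: "(2*\<i> - Pc n j)^2 = (Pc n j - 2*\<i>)^2" by (rule power2_commute)
      have e2: "ev 1 j - ev 2 1 = - (ev 2 1 - ev 1 j)" by simp
      show "(ev 1 j - ev 2 1)/(Pc n j - 2*\<i>)^2 = - ((ev 2 1 - ev 1 j)/(2*\<i> - Pc n j)^2)"
        unfolding e1 e2 by (rule minus_divide_left[symmetric])
    qed
    ultimately show ?thesis by simp
  qed
  have hF: "\<forall>i\<in>{2..n}. Fl n (ev 1) (ev 2 1) i = 0"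
  proof
    fix i assume i: "i \<in> {2..n}"
    define a where "a = i - 1"
    have a: "a < n" "a \<noteq> 0" "a + 1 = i" using i by (auto simp: a_def)
    have "dforce 2 (type1n1 n) (Q0 n) ev 1 i = 0" using rowz[of a] lin[of a] a by simp
    have "i \<in> {1..n}" using i by simp
    from dF_conc[OF n this, of ev, OF ev0] show "Fl n (ev 1) (ev 2 1) i = 0" using \<open>dforce 2 (type1n1 n) (Q0 n) ev 1 i = 0\<close> by simp
  qed
  from core[OF n hG1 hG2 hF] have z: "\<forall>i\<in>{1..n}. ev 1 i = 0" "ev 2 1 = 0" by auto
  have w0: "w 0 = 0" using z(1) ev11 n by auto
  have wall: "w b = 0" if "b < n + 1" for b
  proof (cases "b = 0")
    case True thus ?thesis using w0 by simp
  next
    case False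
    show ?thesis
    proof (cases "b = n")
      case True thus ?thesis using z(2) ev2 w0 by simp
    next
      case F2: False
      have "ev 1 (b+1) = w 0 + w b" using ev1i[of "b+1"] False F2 that by simp
      moreover have "ev 1 (b+1) = 0" using z(1) False F2 that by simp
      ultimately show ?thesis using w0 by simp
    qed
  qed
  have "v = 0\<^sub>v (n+1)"
    by (rule eq_vecI) (use wall dv in \<open>auto simp: w_def\<close>)
  thus False using v(2) by simp
qed

theorem proposition3p3:
  fixes n :: nat
  assumes "n \<ge> 1"
  shows "balanced 2 (type1n1 n) (example_config n)
       \<and> nondegenerate2 n (example_config n)
       \<and> residual_force 2 (type1n1 n) (example_config n) = of_nat (n + 1) / (2 * of_nat n * \<i>)"
proof (intro conjI)
  show "balanced 2 (type1n1 n) (example_config n)" by (rule balanced_ex[OF assms])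
  show "residual_force 2 (type1n1 n) (example_config n) = of_nat (n + 1) / (2 * of_nat n * \<i>)"
    by (rule residual_val[OF assms])
  show "nondegenerate2 n (example_config n)"
    unfolding nondegenerate2_def
    using Jm_deriv[OF assms] Jm_det[OF assms] by blast
qed

end
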